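(* Let $M=\langle n_1,n_2,n_3\rangle$ be a numerical monoid of embedding dimension three with minimal generators $n_1<n_2<n_3$. Then: (1) for all $(a,b,c)\in\mathsf{Z}(\alpha(M)n_2-n_1)$ we have $b=0$; (2) if $L(\alpha(M)n_2)\neq L(\alpha(M)n_2-n_1)+1$, then $L(\alpha(M)n_2)=\alpha(M)$; (3) $L(\alpha(M)n_2)\neq L(\alpha(M)n_2-n_1)+1$ if and only if for all $(a,b,c)\in\mathsf{Z}(\alpha(M)n_2)$ with $b=0$ we have $a+c<\alpha(M)$; (4) if $\alpha(M)=2$ or $\alpha(M)=n_1$, then $L(\alpha(M)n_2)=L(\alpha(M)n_2-n_1)+1$; (5) $\alpha(M)\leq n_1$. Analogously: (1') for all $(a,b,c)\in\mathsf{Z}(\beta(M)n_2-n_3)$ we have $b=0$; (2') if $\ell(\beta(M)n_2)\neq \ell(\beta(M)n_2-n_3)+1$, then $\ell(\beta(M)n_2)=\beta(M)$; (3') $\ell(\beta(M)n_2)\neq \ell(\beta(M)n_2-n_3)+1$ if and only if for all $(a,b,c)\in\mathsf{Z}(\beta(M)n_2)$ with $b=0$ we have $a+c>\beta(M)$; (4') if $\beta(M)=n_3$, then $\ell(\beta(M)n_2)=\ell(\beta(M)n_2-n_3)+1$; (5') $\beta(M)\leq n_3$.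
   Context: $\mathbb{N}$ denotes the nonnegative integers. A numerical monoid is a submonoid of $\mathbb{N}$ with finite complement. For $x\in M$, $\mathsf{Z}(x)=\{(a_1,a_2,a_3)\in\mathbb{N}^3\mid a_1n_1+a_2n_2+a_3n_3=x\}$; the length of a factorization is $a_1+a_2+a_3$; $L(x)$ and $\ell(x)$ are the maximum and minimum factorization lengths of $x$. Define $\alpha(M)=\min\{b\in\mathbb{N}\mid bn_2-n_1\in M\}$ and $\beta(M)=\min\{b\in\mathbb{N}\mid bn_2-n_3\in M\}$. *)

theory Defs
  imports Main
begin

inductive_set submonoid_gen :: "nat set \<Rightarrow> nat set" for A :: "nat set" where
  zero: "0 \<in> submonoid_gen A"
| gen: "a \<in> A \<Longrightarrow> a \<in> submonoid_gen A"
| add: "x \<in> submonoid_gen A \<Longrightarrow> y \<in> submonoid_gen A \<Longrightarrow> x + y \<in> submonoid_gen A"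

definition numerical_monoid :: "nat set \<Rightarrow> bool" where
  "numerical_monoid M \<longleftrightarrow> 0 \<in> M \<and> (\<forall>x\<in>M. \<forall>y\<in>M. x + y \<in> M) \<and> finite (UNIV - M)"

definition minimal_generating_set :: "nat set \<Rightarrow> nat set \<Rightarrow> bool" where
  "minimal_generating_set M A \<longleftrightarrow> submonoid_gen A = M \<and> (\<forall>B. B \<subset> A \<longrightarrow> submonoid_gen B \<noteq> M)"

definition Z :: "nat \<Rightarrow> nat \<Rightarrow> nat \<Rightarrow> nat \<Rightarrow> (nat \<times> nat \<times> nat) set" where
  "Z n1 n2 n3 x = {(a, b, c). a * n1 + b * n2 + c * n3 = x}"

definition fact_len :: "nat \<times> nat \<times> nat \<Rightarrow> nat" where
  "fact_len f = (case f of (a, b, c) \<Rightarrow> a + b + c)"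

definition maxlen :: "nat \<Rightarrow> nat \<Rightarrow> nat \<Rightarrow> nat \<Rightarrow> nat" where
  "maxlen n1 n2 n3 x = Max (fact_len ` Z n1 n2 n3 x)"

definition minlen :: "nat \<Rightarrow> nat \<Rightarrow> nat \<Rightarrow> nat \<Rightarrow> nat" where
  "minlen n1 n2 n3 x = Min (fact_len ` Z n1 n2 n3 x)"

(* alpha(M) = min { b | b*n2 - n1 \<in> M }, subtraction in Z, M \<subseteq> N *)
definition alpha :: "nat set \<Rightarrow> nat \<Rightarrow> nat \<Rightarrow> nat" where
  "alpha M n1 n2 = (LEAST b. n1 \<le> b * n2 \<and> b * n2 - n1 \<in> M)"

definition beta :: "nat set \<Rightarrow> nat \<Rightarrow> nat \<Rightarrow> nat" where
  "beta M n2 n3 = (LEAST b. n3 \<le> b * n2 \<and> b * n2 - n3 \<in> M)"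

end

theory Submission
  imports Defs
begin

lemma gen_sub: assumes "A \<subseteq> submonoid_gen B" "x \<in> submonoid_gen A" shows "x \<in> submonoid_gen B"
  using assms(2) by (induction x rule: submonoid_gen.induct) (use assms(1) in \<open>auto intro: submonoid_gen.intros\<close>)

lemma gen_mult: "n \<in> A \<Longrightarrow> k * n \<in> submonoid_gen A"
  by (induction k) (auto intro: submonoid_gen.intros)

lemma gen3_char: "submonoid_gen {n1,n2,n3} = {x. \<exists>a b c. x = a*n1+b*n2+c*n3}"
proof
  show "submonoid_gen {n1,n2,n3} \<subseteq> {x. \<exists>a b c. x = a*n1+b*n2+c*n3}"
  proof
    fix x assume "x \<in> submonoid_gen {n1,n2,n3}"
    then show "x \<in> {x. \<exists>a b c. x = a*n1+b*n2+c*n3}"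
    proof (induction x rule: submonoid_gen.induct)
      case zero
      then show ?case by (rule CollectI, rule exI[of _ 0], rule exI[of _ 0], rule exI[of _ 0]) simp
    next
      case (gen a)
      then have "a = n1 \<or> a = n2 \<or> a = n3" by auto
      then show ?case
      proof (elim disjE)
        assume "a = n1" thus ?case by (intro CollectI exI[of _ 1] exI[of _ 0]) simp
      next
        assume "a = n2" thus ?case by (intro CollectI exI[of _ 0] exI[of _ 1]) simp
      next
        assume "a = n3" thus ?case by (intro CollectI exI[of _ 0] exI[of _ 0] exI[of _ 1]) simp
      qed
    next
      case (add x y)
      then obtain a b c a' b' c' where "x = a*n1+b*n2+c*n3" "y = a'*n1+b'*n2+c'*n3" by auto
      then have "x + y = (a+a')*n1+(b+b')*n2+(c+c')*n3" by (simp add: algebra_simps)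
      then show ?case by blast
    qed
  qed
next
  show "{x. \<exists>a b c. x = a*n1+b*n2+c*n3} \<subseteq> submonoid_gen {n1,n2,n3}"
    by (auto intro!: submonoid_gen.add gen_mult)
qed

lemma finite_Z: "0<n1 \<Longrightarrow> 0<n2 \<Longrightarrow> 0<n3 \<Longrightarrow> finite (Z n1 n2 n3 x)"
proof -
  assume p: "0<n1" "0<n2" "0<n3"
  have "Z n1 n2 n3 x \<subseteq> {..x} \<times> {..x} \<times> {..x}"
  proof
    fix f assume "f \<in> Z n1 n2 n3 x"
    then obtain a b c where f: "f = (a,b,c)" "a*n1+b*n2+c*n3 = x" by (auto simp: Z_def)
    have "a \<le> a*n1" "b \<le> b*n2" "c \<le> c*n3" using p by auto
    then have "a \<le> x" "b \<le> x" "c \<le> x" using f(2) by linarith+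
    then show "f \<in> {..x} \<times> {..x} \<times> {..x}" using f by auto
  qed
  then show ?thesis by (rule finite_subset) auto
qed

lemma maxlen_ge: "finite (Z n1 n2 n3 x) \<Longrightarrow> f \<in> Z n1 n2 n3 x \<Longrightarrow> fact_len f \<le> maxlen n1 n2 n3 x"
  unfolding maxlen_def by simp

lemma maxlen_att: "finite (Z n1 n2 n3 x) \<Longrightarrow> Z n1 n2 n3 x \<noteq> {} \<Longrightarrow> \<exists>f\<in>Z n1 n2 n3 x. fact_len f = maxlen n1 n2 n3 x"
  unfolding maxlen_def by (metis (no_types, lifting) Max_in finite_imageI image_iff image_is_empty)

lemma minlen_le: "finite (Z n1 n2 n3 x) \<Longrightarrow> f \<in> Z n1 n2 n3 x \<Longrightarrow> minlen n1 n2 n3 x \<le> fact_len f"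
  unfolding minlen_def by simp

lemma minlen_att: "finite (Z n1 n2 n3 x) \<Longrightarrow> Z n1 n2 n3 x \<noteq> {} \<Longrightarrow> \<exists>f\<in>Z n1 n2 n3 x. fact_len f = minlen n1 n2 n3 x"
  unfolding minlen_def by (metis (no_types, lifting) Min_in finite_imageI image_iff image_is_empty)

lemma Zmem: "(a,b,c) \<in> Z n1 n2 n3 x \<longleftrightarrow> a*n1+b*n2+c*n3 = x"
  by (simp add: Z_def)

lemma fl: "fact_len (a,b,c) = a+b+c" by (simp add: fact_len_def)

lemma n1_pos:
  assumes "minimal_generating_set M {n1, n2, n3}" "n1 < n2" "n2 < n3"
  shows "0 < n1"
proof (rule ccontr)
  assume "\<not> 0 < n1"
  hence z: "n1 = 0" by simp
  have sub: "{n2,n3} \<subset> {n1,n2,n3}" using z assms by auto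
  have "submonoid_gen {n1,n2,n3} \<subseteq> submonoid_gen {n2,n3}"
    using gen_sub[of "{n1,n2,n3}" "{n2,n3}"] z by (auto intro: submonoid_gen.intros)
  moreover have "submonoid_gen {n2,n3} \<subseteq> submonoid_gen {n1,n2,n3}"
    using gen_sub[of "{n2,n3}" "{n1,n2,n3}"] by (auto intro: submonoid_gen.intros)
  ultimately have "submonoid_gen {n2,n3} = M" using assms(1) unfolding minimal_generating_set_def by auto
  thus False using sub assms(1) unfolding minimal_generating_set_def by blast
qed

theorem mainTheorem6:
  fixes M :: "nat set" and n1 n2 n3 :: nat
  assumes "numerical_monoid M"
    and "minimal_generating_set M {n1, n2, n3}"
    and "n1 < n2" and "n2 < n3"
  defines "\<alpha> \<equiv> alpha M n1 n2" and "\<beta> \<equiv> beta M n2 n3"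
  shows "(\<forall>(a, b, c) \<in> Z n1 n2 n3 (\<alpha> * n2 - n1). b = 0)
    \<and> (maxlen n1 n2 n3 (\<alpha> * n2) \<noteq> maxlen n1 n2 n3 (\<alpha> * n2 - n1) + 1
         \<longrightarrow> maxlen n1 n2 n3 (\<alpha> * n2) = \<alpha>)
    \<and> (maxlen n1 n2 n3 (\<alpha> * n2) \<noteq> maxlen n1 n2 n3 (\<alpha> * n2 - n1) + 1
         \<longleftrightarrow> (\<forall>(a, b, c) \<in> Z n1 n2 n3 (\<alpha> * n2). b = 0 \<longrightarrow> a + c < \<alpha>))
    \<and> ((\<alpha> = 2 \<or> \<alpha> = n1) \<longrightarrow> maxlen n1 n2 n3 (\<alpha> * n2) = maxlen n1 n2 n3 (\<alpha> * n2 - n1) + 1)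
    \<and> \<alpha> \<le> n1
    \<and> (\<forall>(a, b, c) \<in> Z n1 n2 n3 (\<beta> * n2 - n3). b = 0)
    \<and> (minlen n1 n2 n3 (\<beta> * n2) \<noteq> minlen n1 n2 n3 (\<beta> * n2 - n3) + 1
         \<longrightarrow> minlen n1 n2 n3 (\<beta> * n2) = \<beta>)
    \<and> (minlen n1 n2 n3 (\<beta> * n2) \<noteq> minlen n1 n2 n3 (\<beta> * n2 - n3) + 1
         \<longleftrightarrow> (\<forall>(a, b, c) \<in> Z n1 n2 n3 (\<beta> * n2). b = 0 \<longrightarrow> a + c > \<beta>))
    \<and> (\<beta> = n3 \<longrightarrow> minlen n1 n2 n3 (\<beta> * n2) = minlen n1 n2 n3 (\<beta> * n2 - n3) + 1)
    \<and> \<beta> \<le> n3"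
proof -
  have p1: "0 < n1" using n1_pos[OF assms(2-4)] .
  have p2: "0 < n2" and p3: "0 < n3" using p1 assms(3,4) by auto
  have fin: "\<And>x. finite (Z n1 n2 n3 x)" using finite_Z[OF p1 p2 p3] .
  have Mc: "M = {x. \<exists>a b c. x = a*n1+b*n2+c*n3}"
    using assms(2) gen3_char unfolding minimal_generating_set_def by metis
  have MZ: "\<And>x. x \<in> M \<Longrightarrow> Z n1 n2 n3 x \<noteq> {}"
    using Mc by (auto simp: Z_def)
  define P where "P b \<longleftrightarrow> n1 \<le> b * n2 \<and> b * n2 - n1 \<in> M" for b
  have Pn1: "P n1"
  proof -
    have "n1 * n2 - n1 = (n2 - 1) * n1" by (simp add: algebra_simps diff_mult_distrib)
    moreover have "(n2 - 1) * n1 = (n2 - 1) * n1 + 0 * n2 + 0 * n3" by simp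
    hence "(n2 - 1) * n1 \<in> M" using Mc by blast
    ultimately show ?thesis unfolding P_def using p2 by auto
  qed
  have al: "\<alpha> = (LEAST b. P b)" unfolding \<alpha>_def alpha_def P_def by simp
  have Pal: "P \<alpha>" using LeastI[of P, OF Pn1] al by simp
  have alle: "\<alpha> \<le> n1" using Least_le[of P, OF Pn1] al by simp
  have alnot: "\<And>b. b < \<alpha> \<Longrightarrow> \<not> P b" using not_less_Least al by blast
  define x where "x = \<alpha> * n2"
  have hx: "n1 \<le> x" "x - n1 \<in> M" using Pal unfolding P_def x_def by auto
  have alpos: "0 < \<alpha>" using hx(1) p1 unfolding x_def by (cases \<alpha>) auto
  have A1: "\<forall>(a, b, c) \<in> Z n1 n2 n3 (x - n1). b = 0"
  proof (clarify)
    fix a b c assume "(a,b,c) \<in> Z n1 n2 n3 (x - n1)"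
    hence e: "a*n1+b*n2+c*n3 = x - n1" by (simp add: Zmem)
    show "b = 0"
    proof (rule ccontr)
      assume "b \<noteq> 0"
      then obtain b' where b': "b = Suc b'" by (cases b) auto
      obtain k where k: "\<alpha> = Suc k" using alpos by (cases \<alpha>) auto
      have xk: "x = n2 + k*n2" unfolding x_def k by simp
      have "n1 \<le> k*n2" "k*n2 - n1 = a*n1+b'*n2+c*n3" using e hx(1) xk b' by auto
      moreover have "a*n1+b'*n2+c*n3 \<in> M" using Mc by blast
      ultimately have "P k" unfolding P_def by simp
      moreover have "k < \<alpha>" using k by simp
      ultimately show False using alnot by blast
    qed
  qed
  define L0 where "L0 = maxlen n1 n2 n3 (x - n1)"
  define L where "L = maxlen n1 n2 n3 x"
  obtain a0 b0 c0 where f0: "(a0,b0,c0) \<in> Z n1 n2 n3 (x - n1)" "a0+b0+c0 = L0"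
    using maxlen_att[OF fin MZ[OF hx(2)]] unfolding L0_def fl by (auto simp: fact_len_def)
  have b0: "b0 = 0" using A1 f0(1) by auto
  have sh: "\<And>a b c. (a,b,c) \<in> Z n1 n2 n3 (x - n1) \<Longrightarrow> (Suc a,b,c) \<in> Z n1 n2 n3 x"
    using hx(1) by (auto simp: Zmem)
  have shb: "\<And>a b c. (Suc a,b,c) \<in> Z n1 n2 n3 x \<Longrightarrow> (a,b,c) \<in> Z n1 n2 n3 (x - n1)"
    by (auto simp: Zmem)
  have F1: "L0 + 1 \<le> L"
    using maxlen_ge[OF fin sh[OF f0(1)]] f0(2) unfolding L_def fl by simp
  have F2: "\<alpha> \<le> L"
  proof -
    have "(0,\<alpha>,0) \<in> Z n1 n2 n3 x" by (simp add: Zmem x_def)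
    from maxlen_ge[OF fin this] show ?thesis unfolding L_def fl by simp
  qed
  have a0c: "\<And>b c. (0,b,c) \<in> Z n1 n2 n3 x \<Longrightarrow> b + c \<le> \<alpha>"
  proof -
    fix b c assume "(0,b,c) \<in> Z n1 n2 n3 x"
    hence e: "b*n2+c*n3 = \<alpha>*n2" by (simp add: Zmem x_def)
    have "c*n2 \<le> c*n3" using assms(4) by (intro mult_le_mono2) simp
    hence "(b+c)*n2 \<le> \<alpha>*n2" using e unfolding add_mult_distrib by linarith
    thus "b + c \<le> \<alpha>" using p2 by simp
  qed
  have F3: "L \<le> max (L0+1) \<alpha>"
  proof -
    obtain a b c where f: "(a,b,c) \<in> Z n1 n2 n3 x" "a+b+c = L"
    proof -
      have "Z n1 n2 n3 x \<noteq> {}" using sh[OF f0(1)] by blast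
      from maxlen_att[OF fin this] obtain f where "f \<in> Z n1 n2 n3 x" "fact_len f = L" unfolding L_def by blast
      thus ?thesis using that by (cases f) (auto simp: fact_len_def)
    qed
    show ?thesis
    proof (cases a)
      case 0 thus ?thesis using a0c[of b c] f by fastforce
    next
      case (Suc a')
      have "(a',b,c) \<in> Z n1 n2 n3 (x - n1)" using shb f(1) Suc by simp
      from maxlen_ge[OF fin this] show ?thesis using f Suc unfolding L0_def fl by simp
    qed
  qed
  have Leq: "L = max (L0+1) \<alpha>" using F1 F2 F3 by simp
  have R3: "L \<noteq> L0 + 1 \<longleftrightarrow> (\<forall>(a, b, c) \<in> Z n1 n2 n3 x. b = 0 \<longrightarrow> a + c < \<alpha>)"
  proof
    assume "L \<noteq> L0 + 1"
    hence lt: "L0 + 1 < \<alpha>" using Leq by simp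
    show "\<forall>(a, b, c) \<in> Z n1 n2 n3 x. b = 0 \<longrightarrow> a + c < \<alpha>"
    proof (clarify)
      fix a c assume z: "(a,0,c) \<in> Z n1 n2 n3 x"
      show "a + c < \<alpha>"
      proof (cases a)
        case 0
        hence e: "c*n3 = \<alpha>*n2" using z by (simp add: Zmem x_def)
        show ?thesis
        proof (rule ccontr)
          assume "\<not> a + c < \<alpha>"
          hence "\<alpha> \<le> c" using 0 by simp
          hence "\<alpha>*n3 \<le> c*n3" by simp
          moreover have "\<alpha>*n2 < \<alpha>*n3" using alpos assms(4) by simp
          ultimately show False using e by simp
        qed
      next
        case (Suc a')
        have "(a',0,c) \<in> Z n1 n2 n3 (x - n1)" using shb z Suc by simp
        from maxlen_ge[OF fin this] show ?thesis using lt Suc unfolding L0_def fl by simp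
      qed
    qed
  next
    assume H: "\<forall>(a, b, c) \<in> Z n1 n2 n3 x. b = 0 \<longrightarrow> a + c < \<alpha>"
    have "Suc a0 + c0 < \<alpha>" using H sh[OF f0(1)] b0 by auto
    thus "L \<noteq> L0 + 1" using Leq f0(2) b0 by simp
  qed
  have R4: "(\<alpha> = 2 \<or> \<alpha> = n1) \<longrightarrow> L = L0 + 1"
  proof
    assume "\<alpha> = 2 \<or> \<alpha> = n1"
    thus "L = L0 + 1"
    proof
      assume a2: "\<alpha> = 2"
      have "x - n1 \<noteq> 0" using a2 assms(3) unfolding x_def by simp
      moreover have "a0*n1+b0*n2+c0*n3 = x - n1" using f0(1) by (simp add: Zmem)
      ultimately have "a0+b0+c0 \<noteq> 0" by (metis add_is_0 mult_zero_left)
      thus ?thesis using Leq f0(2) a2 by simp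
    next
      assume an: "\<alpha> = n1"
      have "x - n1 = (n2 - 1) * n1" unfolding x_def an by (simp add: algebra_simps diff_mult_distrib)
      hence "(n2 - 1, 0, 0) \<in> Z n1 n2 n3 (x - n1)" by (simp add: Zmem)
      from maxlen_ge[OF fin this] have "n2 - 1 \<le> L0" unfolding L0_def fl by simp
      thus ?thesis using Leq an assms(3) by simp
    qed
  qed
  define Q where "Q b \<longleftrightarrow> n3 \<le> b * n2 \<and> b * n2 - n3 \<in> M" for b
  have Qn3: "Q n3"
  proof -
    have "n3 * n2 - n3 = (n2 - 1) * n3" by (simp add: algebra_simps diff_mult_distrib)
    moreover have "(n2 - 1) * n3 = 0 * n1 + 0 * n2 + (n2 - 1) * n3" by simp
    hence "(n2 - 1) * n3 \<in> M" using Mc by blast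
    ultimately show ?thesis unfolding Q_def using p2 by auto
  qed
  have be: "\<beta> = (LEAST b. Q b)" unfolding \<beta>_def beta_def Q_def by simp
  have Qbe: "Q \<beta>" using LeastI[of Q, OF Qn3] be by simp
  have bele: "\<beta> \<le> n3" using Least_le[of Q, OF Qn3] be by simp
  have benot: "\<And>b. b < \<beta> \<Longrightarrow> \<not> Q b" using not_less_Least be by blast
  define y where "y = \<beta> * n2"
  have hy: "n3 \<le> y" "y - n3 \<in> M" using Qbe unfolding Q_def y_def by auto
  have bepos: "0 < \<beta>" using hy(1) p3 unfolding y_def by (cases \<beta>) auto
  have B1: "\<forall>(a, b, c) \<in> Z n1 n2 n3 (y - n3). b = 0"
  proof (clarify)
    fix a b c assume "(a,b,c) \<in> Z n1 n2 n3 (y - n3)"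
    hence e: "a*n1+b*n2+c*n3 = y - n3" by (simp add: Zmem)
    show "b = 0"
    proof (rule ccontr)
      assume "b \<noteq> 0"
      then obtain b' where b': "b = Suc b'" by (cases b) auto
      obtain k where k: "\<beta> = Suc k" using bepos by (cases \<beta>) auto
      have yk: "y = n2 + k*n2" unfolding y_def k by simp
      have "n3 \<le> k*n2" "k*n2 - n3 = a*n1+b'*n2+c*n3" using e hy(1) yk b' by auto
      moreover have "a*n1+b'*n2+c*n3 \<in> M" using Mc by blast
      ultimately have "Q k" unfolding Q_def by simp
      moreover have "k < \<beta>" using k by simp
      ultimately show False using benot by blast
    qed
  qed
  define l0 where "l0 = minlen n1 n2 n3 (y - n3)"
  define l where "l = minlen n1 n2 n3 y"
  obtain a1 b1 c1 where g0: "(a1,b1,c1) \<in> Z n1 n2 n3 (y - n3)" "a1+b1+c1 = l0"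
    using minlen_att[OF fin MZ[OF hy(2)]] unfolding l0_def fl by (auto simp: fact_len_def)
  have b1: "b1 = 0" using B1 g0(1) by auto
  have sh3: "\<And>a b c. (a,b,c) \<in> Z n1 n2 n3 (y - n3) \<Longrightarrow> (a,b,Suc c) \<in> Z n1 n2 n3 y"
    using hy(1) by (auto simp: Zmem)
  have sh3b: "\<And>a b c. (a,b,Suc c) \<in> Z n1 n2 n3 y \<Longrightarrow> (a,b,c) \<in> Z n1 n2 n3 (y - n3)"
    by (auto simp: Zmem)
  have G1: "l \<le> l0 + 1"
    using minlen_le[OF fin sh3[OF g0(1)]] g0(2) unfolding l_def fl by simp
  have G2: "l \<le> \<beta>"
  proof -
    have "(0,\<beta>,0) \<in> Z n1 n2 n3 y" by (simp add: Zmem y_def)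
    from minlen_le[OF fin this] show ?thesis unfolding l_def fl by simp
  qed
  have c0c: "\<And>a b. (a,b,0) \<in> Z n1 n2 n3 y \<Longrightarrow> \<beta> \<le> a + b"
  proof -
    fix a b assume "(a,b,0) \<in> Z n1 n2 n3 y"
    hence e: "a*n1+b*n2 = \<beta>*n2" by (simp add: Zmem y_def)
    have "a*n1 \<le> a*n2" using assms(3) by (intro mult_le_mono2) simp
    hence "\<beta>*n2 \<le> (a+b)*n2" using e unfolding add_mult_distrib by linarith
    thus "\<beta> \<le> a + b" using p2 by simp
  qed
  have G3: "min (l0+1) \<beta> \<le> l"
  proof -
    obtain a b c where f: "(a,b,c) \<in> Z n1 n2 n3 y" "a+b+c = l"
    proof -
      have "Z n1 n2 n3 y \<noteq> {}" using sh3[OF g0(1)] by blast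
      from minlen_att[OF fin this] obtain f where "f \<in> Z n1 n2 n3 y" "fact_len f = l" unfolding l_def by blast
      thus ?thesis using that by (cases f) (auto simp: fact_len_def)
    qed
    show ?thesis
    proof (cases c)
      case 0 thus ?thesis using c0c[of a b] f by fastforce
    next
      case (Suc c')
      have "(a,b,c') \<in> Z n1 n2 n3 (y - n3)" using sh3b f(1) Suc by simp
      from minlen_le[OF fin this] show ?thesis using f Suc unfolding l0_def fl by simp
    qed
  qed
  have leq: "l = min (l0+1) \<beta>" using G1 G2 G3 by simp
  have S3: "l \<noteq> l0 + 1 \<longleftrightarrow> (\<forall>(a, b, c) \<in> Z n1 n2 n3 y. b = 0 \<longrightarrow> a + c > \<beta>)"
  proof
    assume "l \<noteq> l0 + 1"
    hence lt: "\<beta> < l0 + 1" using leq by simp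
    show "\<forall>(a, b, c) \<in> Z n1 n2 n3 y. b = 0 \<longrightarrow> a + c > \<beta>"
    proof (clarify)
      fix a c assume z: "(a,0,c) \<in> Z n1 n2 n3 y"
      show "a + c > \<beta>"
      proof (cases c)
        case 0
        hence e: "a*n1 = \<beta>*n2" using z by (simp add: Zmem y_def)
        show ?thesis
        proof (rule ccontr)
          assume "\<not> a + c > \<beta>"
          hence "a \<le> \<beta>" using 0 by simp
          hence "a*n1 \<le> \<beta>*n1" by simp
          moreover have "\<beta>*n1 < \<beta>*n2" using bepos assms(3) by simp
          ultimately show False using e by simp
        qed
      next
        case (Suc c')
        have "(a,0,c') \<in> Z n1 n2 n3 (y - n3)" using sh3b z Suc by simp
        from minlen_le[OF fin this] show ?thesis using lt Suc unfolding l0_def fl by simp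
      qed
    qed
  next
    assume H: "\<forall>(a, b, c) \<in> Z n1 n2 n3 y. b = 0 \<longrightarrow> a + c > \<beta>"
    have "a1 + Suc c1 > \<beta>" using H sh3[OF g0(1)] b1 by auto
    thus "l \<noteq> l0 + 1" using leq g0(2) b1 by simp
  qed
  have S4: "\<beta> = n3 \<longrightarrow> l = l0 + 1"
  proof
    assume bn: "\<beta> = n3"
    have "y - n3 = (n2 - 1) * n3" unfolding y_def bn by (simp add: algebra_simps diff_mult_distrib)
    hence "(0, 0, n2 - 1) \<in> Z n1 n2 n3 (y - n3)" by (simp add: Zmem)
    from minlen_le[OF fin this] have "l0 \<le> n2 - 1" unfolding l0_def fl by simp
    thus "l = l0 + 1" using leq bn assms(4) p2 by simp
  qed
  show ?thesis
    using A1 Leq R3 R4 alle B1 leq S3 S4 bele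
    unfolding x_def[symmetric] y_def[symmetric] L_def[symmetric] L0_def[symmetric]
      l_def[symmetric] l0_def[symmetric]
    by auto
qed

end
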